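(* If $(X,d)$ is a finite metric space of cardinality $n$, then there exists $\alpha\in(0,1)$ such that $(X,d^\alpha)$ admits an isometric embedding into the Euclidean space $\mathbb R^n$.
   Context: For a metric space $(X,d)$ and $\alpha\in(0,1)$, $d^\alpha$ denotes the metric $(x,y)\mapsto d(x,y)^\alpha$. *)

theory Defs
  imports "HOL-Analysis.Analysis"
begin

definition metric_on :: "'a set \<Rightarrow> ('a \<Rightarrow> 'a \<Rightarrow> real) \<Rightarrow> bool" where
  "metric_on X d \<longleftrightarrow>
     (\<forall>x\<in>X. \<forall>y\<in>X. 0 \<le> d x y \<and> (d x y = 0 \<longleftrightarrow> x = y) \<and> d x y = d y x) \<and>
     (\<forall>x\<in>X. \<forall>y\<in>X. \<forall>z\<in>X. d x z \<le> d x y + d y z)"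

definition isometric_embedding :: "'a set \<Rightarrow> ('a \<Rightarrow> 'a \<Rightarrow> real) \<Rightarrow> ('a \<Rightarrow> 'b::metric_space) \<Rightarrow> bool" where
  "isometric_embedding X d f \<longleftrightarrow> (\<forall>x\<in>X. \<forall>y\<in>X. dist (f x) (f y) = d x y)"

end

theory Submission
  imports Defs
begin


lemma sum_sum_insert:
  assumes "finite S" "a \<notin> S"
  shows "(\<Sum>i\<in>insert a S. \<Sum>j\<in>insert a S. f i j :: real) =
     f a a + (\<Sum>j\<in>S. f a j) + (\<Sum>i\<in>S. f i a) + (\<Sum>i\<in>S. \<Sum>j\<in>S. f i j)"
  using assms by (simp add: sum.distrib)

lemma gram_exists:
  assumes "finite S"
  shows "\<forall>G. (\<forall>i\<in>S. \<forall>j\<in>S. G i j = G j i) \<and>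
     (\<forall>x. (\<exists>i\<in>S. x i \<noteq> 0) \<longrightarrow> (\<Sum>i\<in>S. \<Sum>j\<in>S. x i * x j * G i j) > (0::real))
     \<longrightarrow> (\<exists>v::'a\<Rightarrow>'a\<Rightarrow>real. \<forall>i\<in>S. \<forall>j\<in>S. (\<Sum>k\<in>S. v i k * v j k) = G i j)"
  using assms
proof (induction S rule: finite_induct)
  case empty
  then show ?case by simp
next
  case (insert a S)
  show ?case
  proof (intro allI impI, elim conjE)
    fix G :: "'a \<Rightarrow> 'a \<Rightarrow> real"
    assume sym: "\<forall>i\<in>insert a S. \<forall>j\<in>insert a S. G i j = G j i"
      and pd: "\<forall>x. (\<exists>i\<in>insert a S. x i \<noteq> 0) \<longrightarrow> (\<Sum>i\<in>insert a S. \<Sum>j\<in>insert a S. x i * x j * G i j) > 0"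
    define g where "g = G a a"
    have "(\<Sum>i\<in>insert a S. \<Sum>j\<in>insert a S. (if i = a then 1 else 0) * (if j = a then 1 else 0) * G i j) > 0"
      using pd[rule_format, of "\<lambda>i. if i = a then 1 else 0"] by auto
    moreover have "\<forall>j\<in>S. j \<noteq> a" using insert(2) by auto
    ultimately have gpos: "g > 0" using insert(1,2) by (simp add: g_def sum_sum_insert)
    define H where "H i j = G i j - G a i * G a j / g" for i j
    have symH: "\<forall>i\<in>S. \<forall>j\<in>S. H i j = H j i"
    proof (intro ballI)
      fix i j assume "i \<in> S" "j \<in> S"
      then have "G i j = G j i" using sym by blast
      then show "H i j = H j i" by (simp add: H_def mult.commute)
    qed
    have pdH: "\<forall>y. (\<exists>i\<in>S. y i \<noteq> 0) \<longrightarrow> (\<Sum>i\<in>S. \<Sum>j\<in>S. y i * y j * H i j) > 0"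
    proof (intro allI impI)
      fix y :: "'a \<Rightarrow> real"
      assume ex: "\<exists>i\<in>S. y i \<noteq> 0"
      define b where "b = (\<Sum>j\<in>S. G a j * y j)"
      define x where "x = y(a := - b / g)"
      have xS: "\<And>i. i \<in> S \<Longrightarrow> x i = y i" using insert(2) unfolding x_def by auto
      have "(\<Sum>i\<in>insert a S. \<Sum>j\<in>insert a S. x i * x j * G i j) > 0"
        using pd[rule_format, of x] ex xS by (metis insertCI)
      also have "(\<Sum>i\<in>insert a S. \<Sum>j\<in>insert a S. x i * x j * G i j)
         = x a * x a * g + (\<Sum>j\<in>S. x a * y j * G a j) + (\<Sum>i\<in>S. y i * x a * G i a)
           + (\<Sum>i\<in>S. \<Sum>j\<in>S. y i * y j * G i j)"
        by (subst sum_sum_insert[OF insert(1,2)]) (simp add: g_def xS cong: sum.cong)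
      also have "(\<Sum>i\<in>S. y i * x a * G i a) = (\<Sum>j\<in>S. x a * y j * G a j)"
      proof (rule sum.cong)
        fix j assume "j \<in> S"
        then have "G j a = G a j" using sym by blast
        then show "y j * x a * G j a = x a * y j * G a j" by simp
      qed simp
      also have "(\<Sum>j\<in>S. x a * y j * G a j) = x a * b"
        by (simp add: b_def sum_distrib_left mult_ac)
      also have "x a = - b / g" by (simp add: x_def)
      finally have 1: "0 < (\<Sum>i\<in>S. \<Sum>j\<in>S. y i * y j * G i j) - b * b / g"
        using gpos by (simp add: field_simps power2_eq_square)
      have "(\<Sum>i\<in>S. \<Sum>j\<in>S. y i * y j * H i j) =
          (\<Sum>i\<in>S. \<Sum>j\<in>S. y i * y j * G i j) - (\<Sum>i\<in>S. \<Sum>j\<in>S. (G a i * y i) * (G a j * y j) / g)"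
        by (simp add: H_def algebra_simps sum_subtractf)
      also have "(\<Sum>i\<in>S. \<Sum>j\<in>S. (G a i * y i) * (G a j * y j) / g) = b * b / g"
        by (simp add: b_def sum_distrib_left sum_distrib_right sum_divide_distrib mult.commute)
      finally show "(\<Sum>i\<in>S. \<Sum>j\<in>S. y i * y j * H i j) > 0" using 1 by simp
    qed
    obtain w where w: "\<forall>i\<in>S. \<forall>j\<in>S. (\<Sum>k\<in>S. w i k * w j k) = H i j"
      using insert(3) symH pdH by blast
    define v where "v i k = (if k = a then (if i = a then sqrt g else G a i / sqrt g)
        else (if i = a then 0 else w i k))" for i k
    have "\<forall>i\<in>insert a S. \<forall>j\<in>insert a S. (\<Sum>k\<in>insert a S. v i k * v j k) = G i j"
    proof (intro ballI)
      fix i j assume i: "i \<in> insert a S" and j: "j \<in> insert a S"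
      have eq: "(\<Sum>k\<in>insert a S. v i k * v j k) = v i a * v j a + (\<Sum>k\<in>S. v i k * v j k)"
        using insert(1,2) by simp
      have vS: "\<And>i k. k \<in> S \<Longrightarrow> v i k = (if i = a then 0 else w i k)"
        using insert(2) by (auto simp: v_def)
      have sg: "sqrt g * sqrt g = g" using gpos by simp
      show "(\<Sum>k\<in>insert a S. v i k * v j k) = G i j"
      proof (cases "i = a")
        case True
        then show ?thesis
        proof (cases "j = a")
          case True
          with \<open>i = a\<close> show ?thesis unfolding eq using vS sg by (simp add: v_def g_def)
        next
          case False
          with \<open>i = a\<close> show ?thesis unfolding eq using vS gpos by (simp add: v_def)
        qed
      next
        case False
        then have iS: "i \<in> S" using i by auto
        show ?thesis
        proof (cases "j = a")
          case True
          have "G i a = G a i" using sym i by blast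
          with True \<open>i \<noteq> a\<close> show ?thesis unfolding eq using vS gpos by (simp add: v_def)
        next
          case False
          then have jS: "j \<in> S" using j by auto
          have "(\<Sum>k\<in>S. v i k * v j k) = H i j"
            using w iS jS vS \<open>i \<noteq> a\<close> False by simp
          moreover have "v i a * v j a = G a i * G a j / g"
            using \<open>i \<noteq> a\<close> False sg gpos by (simp add: v_def)
          ultimately show ?thesis unfolding eq by (simp add: H_def)
        qed
      qed
    qed
    then show "\<exists>v::'a\<Rightarrow>'a\<Rightarrow>real. \<forall>i\<in>insert a S. \<forall>j\<in>insert a S. (\<Sum>k\<in>insert a S. v i k * v j k) = G i j"
      by blast
  qed
qed



lemma metric_onD: "metric_on X d \<Longrightarrow> x\<in>X \<Longrightarrow> y\<in>X \<Longrightarrow> 0 \<le> d x y \<and> (d x y = 0 \<longleftrightarrow> x = y) \<and> d x y = d y x"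
  unfolding metric_on_def by (elim conjE) (drule bspec, assumption, drule bspec, assumption, assumption)

lemma pd_bound:
  fixes X :: "'a set" and G :: "'a \<Rightarrow> 'a \<Rightarrow> real" and e :: real
  assumes fin: "finite X" and e: "e \<ge> 0" "real (card X) * e < 1"
    and Gb: "\<forall>i\<in>X. \<forall>j\<in>X. \<bar>G i j - (if i = j then 1/2 else 0)\<bar> \<le> e/2"
    and ex: "\<exists>i\<in>X. x i \<noteq> 0"
  shows "(\<Sum>i\<in>X. \<Sum>j\<in>X. x i * x j * G i j) > 0"
proof -
  define N where "N = (\<Sum>i\<in>X. (x i)^2)"
  define F where "F i j = G i j - (if i = j then 1/2 else 0)" for i j
  define n where "n = real (card X)"
  obtain i0 where i0: "i0 \<in> X" "x i0 \<noteq> 0" using ex by blast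
  have Npos: "N > 0" unfolding N_def
    by (rule sum_pos2[OF fin i0(1)]) (use i0 in auto)
  have split: "(\<Sum>i\<in>X. \<Sum>j\<in>X. x i * x j * G i j) =
     (\<Sum>i\<in>X. \<Sum>j\<in>X. (if i = j then x i * x j / 2 else 0)) + (\<Sum>i\<in>X. \<Sum>j\<in>X. x i * x j * F i j)"
  proof -
    have "(\<Sum>i\<in>X. \<Sum>j\<in>X. x i * x j * G i j) =
      (\<Sum>i\<in>X. \<Sum>j\<in>X. (if i = j then x i * x j / 2 else 0) + x i * x j * F i j)"
      by (intro sum.cong refl) (auto simp: F_def algebra_simps)
    then show ?thesis by (simp add: sum.distrib)
  qed
  have first: "(\<Sum>i\<in>X. \<Sum>j\<in>X. (if i = j then x i * x j / 2 else 0)) = N / 2"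
    using fin by (simp add: N_def sum_divide_distrib power2_eq_square)
  have trm: "\<bar>x i * x j * F i j\<bar> \<le> ((x i)^2 + (x j)^2) / 2 * (e/2)" if "i \<in> X" "j \<in> X" for i j
  proof -
    have a: "\<bar>x i * x j\<bar> \<le> ((x i)^2 + (x j)^2) / 2"
    proof -
      have "0 \<le> (\<bar>x i\<bar> - \<bar>x j\<bar>)^2" by simp
      then show ?thesis by (simp add: power2_eq_square abs_mult algebra_simps)
    qed
    have b: "\<bar>F i j\<bar> \<le> e/2" using Gb that by (simp add: F_def)
    have "\<bar>x i * x j * F i j\<bar> = \<bar>x i * x j\<bar> * \<bar>F i j\<bar>" by (simp add: abs_mult)
    also have "\<dots> \<le> ((x i)^2 + (x j)^2) / 2 * (e/2)"
      by (rule mult_mono[OF a b]) auto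
    finally show ?thesis .
  qed
  have "\<bar>\<Sum>i\<in>X. \<Sum>j\<in>X. x i * x j * F i j\<bar> \<le> (\<Sum>i\<in>X. \<bar>\<Sum>j\<in>X. x i * x j * F i j\<bar>)"
    by (rule sum_abs)
  also have "\<dots> \<le> (\<Sum>i\<in>X. \<Sum>j\<in>X. \<bar>x i * x j * F i j\<bar>)"
    by (intro sum_mono sum_abs)
  also have "\<dots> \<le> (\<Sum>i\<in>X. \<Sum>j\<in>X. ((x i)^2 + (x j)^2) / 2 * (e/2))"
    by (intro sum_mono trm)
  also have "\<dots> = (e/4) * (\<Sum>i\<in>X. \<Sum>j\<in>X. (x i)^2) + (e/4) * (\<Sum>i\<in>X. \<Sum>j\<in>X. (x j)^2)"
    by (simp add: sum_distrib_left sum.distrib algebra_simps add_divide_distrib)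
  also have "(\<Sum>i\<in>X. \<Sum>j\<in>X. (x i)^2) = n * N"
    by (simp add: n_def N_def sum_distrib_left)
  also have "(\<Sum>i\<in>X. \<Sum>j\<in>X. (x j)^2) = n * N"
    by (simp add: n_def N_def)
  finally have R: "\<bar>\<Sum>i\<in>X. \<Sum>j\<in>X. x i * x j * F i j\<bar> \<le> e * n * N / 2" by (simp add: mult_ac)
  have "e * n * N / 2 < N / 2"
    using Npos e by (simp add: n_def mult.commute)
  then show ?thesis unfolding split first using R by linarith
qed

theorem proposition2p2:
  fixes X :: "'a set" and d :: "'a \<Rightarrow> 'a \<Rightarrow> real"
  assumes "finite X" and "metric_on X d" and "card X = CARD('n::finite)"
  shows "\<exists>\<alpha>::real. 0 < \<alpha> \<and> \<alpha> < 1 \<and>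
           (\<exists>f :: 'a \<Rightarrow> real ^ 'n. isometric_embedding X (\<lambda>x y. d x y powr \<alpha>) f)"
proof -
  note fin = assms(1)
  note mD = metric_onD[OF assms(2)]
  have d0: "\<And>i. i \<in> X \<Longrightarrow> d i i = 0" using mD by blast
  have dsym: "\<And>i j. i \<in> X \<Longrightarrow> j \<in> X \<Longrightarrow> d i j = d j i" using mD by blast
  have dpos: "\<And>i j. i \<in> X \<Longrightarrow> j \<in> X \<Longrightarrow> i \<noteq> j \<Longrightarrow> d i j > 0"
  proof -
    fix i j assume "i \<in> X" "j \<in> X" "i \<noteq> j"
    with mD[of i j] show "d i j > 0" by (simp add: less_le)
  qed
  define e where "e = 1 / (real (card X) + 1)"
  have epos: "e > 0" by (simp add: e_def)
  have ne: "real (card X) * e < 1" by (simp add: e_def field_simps)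
  have ev1: "eventually (\<lambda>a. 0 < a \<and> a < (1::real)) (at_right 0)"
    using eventually_at_right_real[of 0 1] by (simp add: eventually_mono)
  have ev2: "eventually (\<lambda>a. \<forall>i\<in>X. \<forall>j\<in>X. i \<noteq> j \<longrightarrow> \<bar>(d i j powr a)^2 - 1\<bar> < e) (at_right 0)"
  proof (intro eventually_ball_finite fin ballI)
    fix i j assume i: "i \<in> X" and j: "j \<in> X"
    show "eventually (\<lambda>a. i \<noteq> j \<longrightarrow> \<bar>(d i j powr a)^2 - 1\<bar> < e) (at_right 0)"
    proof (cases "i = j")
      case True then show ?thesis by simp
    next
      case False
      then have dp: "d i j > 0" using dpos i j by blast
      have "((\<lambda>a. (d i j powr a)^2) \<longlongrightarrow> (d i j powr 0)^2) (at_right (0::real))"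
        using dp by (intro tendsto_intros) auto
      then have "((\<lambda>a. (d i j powr a)^2) \<longlongrightarrow> 1) (at_right (0::real))"
        using dp by simp
      from tendstoD[OF this epos] show ?thesis
        by (rule eventually_mono) (simp add: dist_real_def)
    qed
  qed
  obtain \<alpha> where a01: "0 < \<alpha>" "\<alpha> < 1"
    and aE: "\<forall>i\<in>X. \<forall>j\<in>X. i \<noteq> j \<longrightarrow> \<bar>(d i j powr \<alpha>)^2 - 1\<bar> < e"
  proof -
    have "eventually (\<lambda>a. (0 < a \<and> a < (1::real)) \<and> (\<forall>i\<in>X. \<forall>j\<in>X. i \<noteq> j \<longrightarrow> \<bar>(d i j powr a)^2 - 1\<bar> < e)) (at_right 0)"
      using ev1 ev2 by (rule eventually_conj)
    then obtain b where b: "b > 0" "\<forall>y>0. y < b \<longrightarrow> (0 < y \<and> y < (1::real)) \<and> (\<forall>i\<in>X. \<forall>j\<in>X. i \<noteq> j \<longrightarrow> \<bar>(d i j powr y)^2 - 1\<bar> < e)"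
      unfolding eventually_at_right_field by blast
    have "(0 < b/2 \<and> b/2 < (1::real)) \<and> (\<forall>i\<in>X. \<forall>j\<in>X. i \<noteq> j \<longrightarrow> \<bar>(d i j powr (b/2))^2 - 1\<bar> < e)"
      using b(2)[rule_format, of "b/2"] b(1) by linarith
    then show ?thesis using that by blast
  qed
  define G where "G i j = (1 - (d i j powr \<alpha>)^2) / 2" for i j
  have Gsym: "\<forall>i\<in>X. \<forall>j\<in>X. G i j = G j i"
  proof (intro ballI)
    fix i j assume "i \<in> X" "j \<in> X"
    then have "d i j = d j i" by (rule dsym)
    then show "G i j = G j i" by (simp add: G_def)
  qed
  have Gb: "\<forall>i\<in>X. \<forall>j\<in>X. \<bar>G i j - (if i = j then 1/2 else 0)\<bar> \<le> e/2"
  proof (intro ballI)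
    fix i j assume i: "i \<in> X" and j: "j \<in> X"
    show "\<bar>G i j - (if i = j then 1/2 else 0)\<bar> \<le> e/2"
    proof (cases "i = j")
      case True then show ?thesis using d0 i epos by (simp add: G_def)
    next
      case False
      then have "\<bar>(d i j powr \<alpha>)^2 - 1\<bar> < e" using aE i j by blast
      with False show ?thesis by (simp add: G_def abs_minus_commute)
    qed
  qed
  have "\<forall>G. (\<forall>i\<in>X. \<forall>j\<in>X. G i j = G j i) \<and>
     (\<forall>x. (\<exists>i\<in>X. x i \<noteq> 0) \<longrightarrow> (\<Sum>i\<in>X. \<Sum>j\<in>X. x i * x j * G i j) > (0::real))
     \<longrightarrow> (\<exists>v::'a\<Rightarrow>'a\<Rightarrow>real. \<forall>i\<in>X. \<forall>j\<in>X. (\<Sum>k\<in>X. v i k * v j k) = G i j)"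
    by (rule gram_exists[OF fin])
  moreover have "\<forall>x. (\<exists>i\<in>X. x i \<noteq> 0) \<longrightarrow> (\<Sum>i\<in>X. \<Sum>j\<in>X. x i * x j * G i j) > (0::real)"
    using pd_bound[OF fin _ ne Gb] epos by auto
  ultimately obtain v :: "'a\<Rightarrow>'a\<Rightarrow>real" where v: "\<forall>i\<in>X. \<forall>j\<in>X. (\<Sum>k\<in>X. v i k * v j k) = G i j"
    using Gsym by blast
  obtain h :: "'n \<Rightarrow> 'a" where h: "bij_betw h UNIV X"
    using finite_same_card_bij[of "UNIV :: 'n set" X] fin assms(3) by auto
  define f :: "'a \<Rightarrow> real ^ 'n" where "f x = (\<chi> k. v x (h k))" for x
  have "isometric_embedding X (\<lambda>x y. d x y powr \<alpha>) f"
    unfolding isometric_embedding_def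
  proof (intro ballI)
    fix x y assume x: "x \<in> X" and y: "y \<in> X"
    have "dist (f x) (f y) = sqrt (\<Sum>k\<in>UNIV. (v x (h k) - v y (h k))^2)"
      by (simp add: dist_norm norm_vec_def L2_set_def f_def)
    also have "(\<Sum>k\<in>UNIV. (v x (h k) - v y (h k))^2) = (\<Sum>m\<in>X. (v x m - v y m)^2)"
      using sum.reindex_bij_betw[OF h, of "\<lambda>m. (v x m - v y m)^2"] by simp
    also have "\<dots> = (\<Sum>m\<in>X. v x m * v x m) + (\<Sum>m\<in>X. v y m * v y m) - 2 * (\<Sum>m\<in>X. v x m * v y m)"
      by (simp add: power2_eq_square algebra_simps sum.distrib sum_subtractf sum_distrib_left)
    also have "\<dots> = G x x + G y y - 2 * G x y" using v x y by simp
    also have "\<dots> = (d x y powr \<alpha>)^2" using d0 x y by (simp add: G_def field_simps)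
    also have "sqrt \<dots> = d x y powr \<alpha>" by simp
    finally show "dist (f x) (f y) = d x y powr \<alpha>" .
  qed
  then show ?thesis using a01 by blast
qed

end
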